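(* In the interval covering setting with known but possibly unequal interval lengths and a covering interval of length $1$, for every $\varepsilon\in(0,1)$ the approximation ratio of the Weighted-Median mechanism is at least $1/\varepsilon$.
   Context: Each agent $i$ has an interval $I_i=[s_i,t_i]$ on the real line whose length $|I_i|>0$ is publicly known; the agents are indexed so that $s_1\le s_2\le\dots\le s_n$. A covering interval $C$ of length $1$ is placed; the cost of agent $i$ is $|I_i|-|I_i\cap C|$ and the social cost is the sum of the agents' costs. For an agent $i$, let $L(i)$ be the set of agents before $i$ in this order. The Weighted-Median mechanism places $C$ at the starting position $s_{i^*}$ (i.e., $C=[s_{i^*},s_{i^*}+1]$) of the leftmost agent $i^*$ such that $\sum_{i\in L(i^* )}|I_i|+|I_{i^*}|\ge\frac12\sum_{i}|I_i|$ and $\sum_{i\in L(i^* )}|I_i|<\frac12\sum_i|I_i|$. The approximation ratio is the supremum over instances of the mechanism's social cost divided by the minimum social cost over all placements of $C$. *)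

theory Defs
  imports Complex_Main "HOL-Library.Extended_Real"
begin

(* An instance: n agents indexed 0..<n, agent i has interval [s i, s i + len i]. *)
definition valid_instance :: "nat \<Rightarrow> (nat \<Rightarrow> real) \<Rightarrow> (nat \<Rightarrow> real) \<Rightarrow> bool" where
  "valid_instance n s len \<longleftrightarrow> n \<ge> 1 \<and> (\<forall>i<n. len i > 0) \<and> (\<forall>i j. i \<le> j \<and> j < n \<longrightarrow> s i \<le> s j)"

definition overlap :: "real \<Rightarrow> real \<Rightarrow> real \<Rightarrow> real \<Rightarrow> real" where
  "overlap a b c d = max 0 (min b d - max a c)"

definition agent_cost :: "(nat \<Rightarrow> real) \<Rightarrow> (nat \<Rightarrow> real) \<Rightarrow> real \<Rightarrow> nat \<Rightarrow> real" where
  "agent_cost s len c i = len i - overlap (s i) (s i + len i) c (c + 1)"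

definition social_cost :: "nat \<Rightarrow> (nat \<Rightarrow> real) \<Rightarrow> (nat \<Rightarrow> real) \<Rightarrow> real \<Rightarrow> real" where
  "social_cost n s len c = (\<Sum>i<n. agent_cost s len c i)"

definition opt_cost :: "nat \<Rightarrow> (nat \<Rightarrow> real) \<Rightarrow> (nat \<Rightarrow> real) \<Rightarrow> real" where
  "opt_cost n s len = (INF c. social_cost n s len c)"

definition wm_agent :: "nat \<Rightarrow> (nat \<Rightarrow> real) \<Rightarrow> nat" where
  "wm_agent n len = (LEAST k. k < n \<and>
      (\<Sum>j<k. len j) + len k \<ge> (\<Sum>j<n. len j) / 2 \<and>
      (\<Sum>j<k. len j) < (\<Sum>j<n. len j) / 2)"

definition wm_position :: "nat \<Rightarrow> (nat \<Rightarrow> real) \<Rightarrow> (nat \<Rightarrow> real) \<Rightarrow> real" where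
  "wm_position n s len = s (wm_agent n len)"

definition wm_cost :: "nat \<Rightarrow> (nat \<Rightarrow> real) \<Rightarrow> (nat \<Rightarrow> real) \<Rightarrow> real" where
  "wm_cost n s len = social_cost n s len (wm_position n s len)"

definition wm_approx_ratio :: ereal where
  "wm_approx_ratio = (SUP (n, s, len) \<in> {(n, s, len). valid_instance n s len \<and> opt_cost n s len > 0}.
       ereal (wm_cost n s len / opt_cost n s len))"

end

theory Submission
  imports Defs
begin

lemma sum3: "(\<Sum>i<(3::nat). f i) = f 0 + f 1 + (f 2 :: real)"
  by (simp add: numeral_3_eq_3 lessThan_Suc eval_nat_numeral)

theorem proposition1:
  fixes \<epsilon> :: real
  assumes "0 < \<epsilon>" and "\<epsilon> < 1"
  shows "wm_approx_ratio \<ge> ereal (1 / \<epsilon>)"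
proof -
  define h where "h = \<epsilon> / 2"
  have h0: "0 < h" and h1: "h < 1/2" using assms by (auto simp: h_def)
  define s :: "nat \<Rightarrow> real" where "s = (\<lambda>i. if i = 0 then 0 else 1/2)"
  define len :: "nat \<Rightarrow> real" where "len = (\<lambda>i. if i = 0 then 1 else 1/2 + h)"
  have vi: "valid_instance 3 s len"
    unfolding valid_instance_def s_def len_def using h0 by auto
  have c0: "agent_cost s len c 0 = min 1 \<bar>c\<bar>" for c
    unfolding agent_cost_def overlap_def s_def len_def by (auto simp: min_def max_def abs_if)
  have c1: "agent_cost s len c i \<ge> min (1/2 + h) (max 0 (h - c))" if "i > 0" for c i
    using that h0 h1 unfolding agent_cost_def overlap_def s_def len_def by (auto simp: min_def max_def)
  have sc: "social_cost 3 s len c = agent_cost s len c 0 + agent_cost s len c 1 + agent_cost s len c 2" for c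
    unfolding social_cost_def by (rule sum3)
  have lb: "social_cost 3 s len c \<ge> h" for c
  proof -
    have "agent_cost s len c 1 \<ge> min (1/2 + h) (max 0 (h - c))" "agent_cost s len c 2 \<ge> min (1/2 + h) (max 0 (h - c))"
      by (auto intro!: c1)
    moreover have m: "min (1/2 + h) (max 0 (h - c)) \<ge> 0" using h0 by simp
    ultimately have "agent_cost s len c 1 \<ge> 0" "agent_cost s len c 2 \<ge> 0" "agent_cost s len c 1 \<ge> min (1/2 + h) (max 0 (h - c))" "agent_cost s len c 2 \<ge> min (1/2 + h) (max 0 (h - c))" by linarith+
    then
    show ?thesis unfolding sc c0 using h0 h1
      by (cases "c \<le> -1/2"; cases "c \<le> h"; cases "\<bar>c\<bar> \<le> 1") (auto simp: min_def max_def abs_if)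
  qed
  have at_h: "social_cost 3 s len h = h"
    unfolding sc unfolding agent_cost_def overlap_def s_def len_def using h0 h1 by (simp add: min_def max_def)
  have bdd: "bdd_below (range (social_cost 3 s len))"
    by (rule bdd_belowI2[where m=h]) (rule lb)
  have opt_le: "opt_cost 3 s len \<le> h"
    unfolding opt_cost_def using cINF_lower[OF bdd, of h] at_h by simp
  have opt_ge: "opt_cost 3 s len \<ge> h"
    unfolding opt_cost_def by (rule cINF_greatest) (auto intro: lb)
  have tot: "(\<Sum>j<(3::nat). len j) = 2 + 2*h" unfolding sum3 len_def by simp
  have wa: "wm_agent 3 len = 1"
    unfolding wm_agent_def tot
  proof (rule Least_equality)
    show "1 < (3::nat) \<and> (\<Sum>j<1. len j) + len 1 \<ge> (2 + 2 * h) / 2 \<and> (\<Sum>j<1. len j) < (2 + 2 * h) / 2"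
      using h0 by (simp add: len_def)
  next
    fix y assume "y < 3 \<and> (\<Sum>j<y. len j) + len y \<ge> (2 + 2 * h) / 2 \<and> (\<Sum>j<y. len j) < (2 + 2 * h) / 2"
    then show "1 \<le> y" using h0 by (cases y) (auto simp: len_def)
  qed
  have wc: "wm_cost 3 s len = 1/2"
    unfolding wm_cost_def wm_position_def wa sc unfolding agent_cost_def overlap_def
    using h0 h1 by (simp add: s_def len_def min_def max_def)
  have "ereal (1/\<epsilon>) \<le> ereal (wm_cost 3 s len / opt_cost 3 s len)"
  proof -
    have "1/\<epsilon> = (1/2) / h" by (simp add: h_def)
    also have "\<dots> \<le> (1/2) / opt_cost 3 s len"
      using opt_le opt_ge h0 by simp
    also have "\<dots> = wm_cost 3 s len / opt_cost 3 s len" by (simp only: wc)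
    finally show ?thesis by simp
  qed
  also have "\<dots> \<le> wm_approx_ratio"
    unfolding wm_approx_ratio_def
    by (rule SUP_upper2[where i="(3, s, len)"]) (use vi opt_ge h0 in auto)
  finally show ?thesis .
qed

end
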